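(* For every $D \in \Omega_n$, $$ \big( \|D\|_{\mathcal{S}_2}^2 + n - 2 \big)^{1/2} \le r_{\mathcal{S}_2}(D) \le \big( \|D\|_{\mathcal{S}_2}^2 + n \big)^{1/2}. $$ Moreover, $\sup_{D\in\Omega_n}\Big| \dfrac{r_{\mathcal{S}_2}(D)^2}{\|D\|_{\mathcal{S}_2}^2 + n} - 1\Big| \to 0$ as $n\to\infty$.
   Context: $\Omega_n$ denotes the set of $n\times n$ doubly stochastic matrices (nonnegative real entries, all row and column sums equal to $1$). $\|\cdot\|_{\mathcal{S}_2}$ is the Frobenius norm $\|A\|_{\mathcal{S}_2}=\big(\sum_{i,j}a_{ij}^2\big)^{1/2}$. For $A\in M_n(\mathbb{R})$, $r_{\mathcal{S}_2}(A) := \max_{B\in\Omega_n}\|A-B\|_{\mathcal{S}_2}$ is the minimal radius of a bounding ball of $\Omega_n$ centered at $A$. *)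

theory Defs
  imports "HOL-Analysis.Analysis"
begin

text \<open>n x n real matrices are represented as functions nat => nat => real,
  only the entries with indices below n are relevant.\<close>

definition doubly_stochastic :: "nat \<Rightarrow> (nat \<Rightarrow> nat \<Rightarrow> real) \<Rightarrow> bool" where
  "doubly_stochastic n A \<longleftrightarrow>
     (\<forall>i<n. \<forall>j<n. 0 \<le> A i j) \<and>
     (\<forall>i<n. (\<Sum>j<n. A i j) = 1) \<and>
     (\<forall>j<n. (\<Sum>i<n. A i j) = 1)"

definition Omega :: "nat \<Rightarrow> (nat \<Rightarrow> nat \<Rightarrow> real) set" where
  "Omega n = {A. doubly_stochastic n A}"

definition frob :: "nat \<Rightarrow> (nat \<Rightarrow> nat \<Rightarrow> real) \<Rightarrow> real" where
  "frob n A = sqrt (\<Sum>i<n. \<Sum>j<n. (A i j)\<^sup>2)"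

text \<open>Minimal radius of a bounding ball of Omega n centred at A (the max is attained
  by compactness; we write it as a supremum).\<close>
definition r_S2 :: "nat \<Rightarrow> (nat \<Rightarrow> nat \<Rightarrow> real) \<Rightarrow> real" where
  "r_S2 n A = (SUP B\<in>Omega n. frob n (\<lambda>i j. A i j - B i j))"

end

theory Submission
  imports Defs
begin

lemma shift_bij: "bij_betw (\<lambda>i. (i + k) mod n) {..<(n::nat)} {..<n}"
proof (cases "n = 0")
  case True then show ?thesis by (simp add: bij_betw_def)
next
  case False
  have inj: "inj_on (\<lambda>i. (i + k) mod n) {..<n}"
  proof (rule inj_onI)
    fix a b assume a: "a \<in> {..<n}" and b: "b \<in> {..<n}" and e: "(a + k) mod n = (b + k) mod n"
    have key: "x = y" if xy: "x \<le> y" "y < n" "(x + k) mod n = (y + k) mod n" for x y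
    proof -
      have "n dvd (y + k) - (x + k)" using xy by (subst mod_eq_dvd_iff_nat[symmetric]) auto
      then have "n dvd y - x" by simp
      moreover have "y - x < n" using xy by simp
      ultimately have "y - x = 0" using dvd_imp_le by (cases "y - x = 0") auto
      then show ?thesis using xy by simp
    qed
    show "a = b"
    proof (cases "a \<le> b")
      case True then show ?thesis using key[of a b] b e by simp
    next
      case False then show ?thesis using key[of b a] a e by simp
    qed
  qed
  have sub: "(\<lambda>i. (i + k) mod n) ` {..<n} \<subseteq> {..<n}" using False by auto
  have "(\<lambda>i. (i + k) mod n) ` {..<n} = {..<n}"
    by (rule endo_inj_surj[OF _ sub inj]) simp
  then show ?thesis using inj by (simp add: bij_betw_def)
qed

lemma shift_sum: "(\<Sum>i<n. f ((i + k) mod n)) = (\<Sum>j<(n::nat). f j)"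
  using sum.reindex_bij_betw[OF shift_bij, of f k n] by simp

lemma shift_sum': "(\<Sum>k<n. f ((i + k) mod n)) = (\<Sum>j<(n::nat). f j)"
  unfolding add.commute[of i] by (rule shift_sum)

definition pmat :: "nat \<Rightarrow> nat \<Rightarrow> nat \<Rightarrow> nat \<Rightarrow> real" where
  "pmat n k = (\<lambda>i j. if j = (i + k) mod n then 1 else 0)"

lemma pmat_Omega: "pmat n k \<in> Omega n"
proof -
  have r: "(\<Sum>j<n. pmat n k i j) = 1" if "i < n" for i
  proof -
    have "(i + k) mod n < n" using that by simp
    then show ?thesis unfolding pmat_def by (simp add: sum.delta)
  qed
  have c: "(\<Sum>i<n. pmat n k i j) = 1" if "j < n" for j
  proof -
    have "(\<Sum>i<n. pmat n k i j) = (\<Sum>i<n. (\<lambda>j'. if j = j' then 1 else 0::real) ((i + k) mod n))"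
      unfolding pmat_def by simp
    also have "\<dots> = (\<Sum>j'<n. (if j = j' then 1 else 0::real))" by (rule shift_sum)
    also have "\<dots> = 1" using that by (simp add: sum.delta)
    finally show ?thesis .
  qed
  show ?thesis unfolding Omega_def doubly_stochastic_def
    using r c by (auto simp: pmat_def)
qed

lemma Omega_ne: "Omega n \<noteq> {}" using pmat_Omega by blast

lemma frob_sq: "(frob n A)\<^sup>2 = (\<Sum>i<n. \<Sum>j<n. (A i j)\<^sup>2)"
  unfolding frob_def by (simp add: sum_nonneg)

lemma upper_sq:
  assumes D: "D \<in> Omega n" and B: "B \<in> Omega n"
  shows "(\<Sum>i<n. \<Sum>j<n. (D i j - B i j)\<^sup>2) \<le> (\<Sum>i<n. \<Sum>j<n. (D i j)\<^sup>2) + real n"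
proof -
  have Dn: "\<And>i j. i<n \<Longrightarrow> j<n \<Longrightarrow> 0 \<le> D i j" using D by (simp add: Omega_def doubly_stochastic_def)
  have Bn: "\<And>i j. i<n \<Longrightarrow> j<n \<Longrightarrow> 0 \<le> B i j" using B by (simp add: Omega_def doubly_stochastic_def)
  have Br: "\<And>i. i<n \<Longrightarrow> (\<Sum>j<n. B i j) = 1" using B by (simp add: Omega_def doubly_stochastic_def)
  have B1: "B i j \<le> 1" if "i<n" "j<n" for i j
  proof -
    have "B i j \<le> (\<Sum>j<n. B i j)" by (rule member_le_sum) (use that Bn in auto)
    then show ?thesis using Br that by simp
  qed
  have pt: "(D i j - B i j)\<^sup>2 \<le> (D i j)\<^sup>2 + B i j" if "i<n" "j<n" for i j
  proof -
    have "B i j * B i j \<le> B i j" using B1[OF that] Bn[OF that] by (simp add: mult_left_le)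
    moreover have "0 \<le> D i j * B i j" using Dn[OF that] Bn[OF that] by simp
    ultimately show ?thesis by (simp add: power2_eq_square algebra_simps)
  qed
  have "(\<Sum>i<n. \<Sum>j<n. (D i j - B i j)\<^sup>2) \<le> (\<Sum>i<n. \<Sum>j<n. (D i j)\<^sup>2 + B i j)"
    by (intro sum_mono) (use pt in auto)
  also have "\<dots> = (\<Sum>i<n. \<Sum>j<n. (D i j)\<^sup>2) + (\<Sum>i<n. \<Sum>j<n. B i j)"
    by (simp add: sum.distrib)
  also have "(\<Sum>i<n. \<Sum>j<n. B i j) = real n" using Br by simp
  finally show ?thesis by simp
qed

lemma frob_upper:
  assumes "D \<in> Omega n" "B \<in> Omega n"
  shows "frob n (\<lambda>i j. D i j - B i j) \<le> sqrt ((frob n D)\<^sup>2 + real n)"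
  unfolding frob_def[of n "\<lambda>i j. D i j - B i j"] frob_sq
  using upper_sq[OF assms] by simp

lemma bdd: "D \<in> Omega n \<Longrightarrow> bdd_above ((\<lambda>B. frob n (\<lambda>i j. D i j - B i j)) ` Omega n)"
  using frob_upper by (auto intro!: bdd_aboveI)

lemma r_upper: "D \<in> Omega n \<Longrightarrow> r_S2 n D \<le> sqrt ((frob n D)\<^sup>2 + real n)"
  unfolding r_S2_def using frob_upper Omega_ne by (auto intro!: cSUP_least)

lemma r_ge: "D \<in> Omega n \<Longrightarrow> B \<in> Omega n \<Longrightarrow> frob n (\<lambda>i j. D i j - B i j) \<le> r_S2 n D"
  unfolding r_S2_def using bdd by (auto intro!: cSUP_upper)

lemma good_shift:
  assumes D: "D \<in> Omega n" and n: "n \<ge> 1"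
  shows "\<exists>k<n. (\<Sum>i<n. D i ((i + k) mod n)) \<le> 1"
proof (rule ccontr)
  assume "\<not> ?thesis"
  then have gt: "\<And>k. k<n \<Longrightarrow> 1 < (\<Sum>i<n. D i ((i + k) mod n))" by auto
  have Dr: "\<And>i. i<n \<Longrightarrow> (\<Sum>j<n. D i j) = 1" using D by (simp add: Omega_def doubly_stochastic_def)
  have "(\<Sum>k<n. (1::real)) < (\<Sum>k<n. \<Sum>i<n. D i ((i + k) mod n))"
    by (rule sum_strict_mono) (use n gt in \<open>auto simp: lessThan_empty_iff\<close>)
  also have "\<dots> = (\<Sum>i<n. \<Sum>k<n. D i ((i + k) mod n))"
    by (rule sum.swap)
  also have "\<dots> = (\<Sum>i<n. \<Sum>j<n. D i j)"
    by (rule sum.cong[OF refl]) (rule shift_sum')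
  also have "\<dots> = real n" using Dr by simp
  finally show False by simp
qed

lemma pmat_dist:
  "(\<Sum>i<n. \<Sum>j<n. (D i j - pmat n k i j)\<^sup>2)
     = (\<Sum>i<n. \<Sum>j<n. (D i j)\<^sup>2) - 2 * (\<Sum>i<n. D i ((i + k) mod n)) + real n"
proof -
  have row: "(\<Sum>j<n. (D i j - pmat n k i j)\<^sup>2) = (\<Sum>j<n. (D i j)\<^sup>2) - 2 * D i ((i + k) mod n) + 1"
    if "i < n" for i
  proof -
    have m: "(i + k) mod n < n" using that by simp
    have "(\<Sum>j<n. (D i j - pmat n k i j)\<^sup>2)
        = (\<Sum>j<n. (D i j)\<^sup>2 + (if j = (i + k) mod n then 1 - 2 * D i j else 0))"
      by (intro sum.cong refl) (auto simp: pmat_def power2_eq_square algebra_simps)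
    also have "\<dots> = (\<Sum>j<n. (D i j)\<^sup>2) + (1 - 2 * D i ((i + k) mod n))"
      using m by (simp add: sum.distrib sum.delta')
    finally show ?thesis by simp
  qed
  have "(\<Sum>i<n. \<Sum>j<n. (D i j - pmat n k i j)\<^sup>2)
      = (\<Sum>i<n. (\<Sum>j<n. (D i j)\<^sup>2) - 2 * D i ((i + k) mod n) + 1)"
    using row by simp
  also have "\<dots> = (\<Sum>i<n. \<Sum>j<n. (D i j)\<^sup>2) - 2 * (\<Sum>i<n. D i ((i + k) mod n)) + real n"
    by (simp add: sum.distrib sum_subtractf sum_distrib_left)
  finally show ?thesis .
qed

lemma r_lower:
  assumes D: "D \<in> Omega n" and n: "n \<ge> 1"
  shows "sqrt ((frob n D)\<^sup>2 + real n - 2) \<le> r_S2 n D"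
proof -
  obtain k where k: "k < n" "(\<Sum>i<n. D i ((i + k) mod n)) \<le> 1" using good_shift[OF D n] by blast
  have "sqrt ((frob n D)\<^sup>2 + real n - 2) \<le> frob n (\<lambda>i j. D i j - pmat n k i j)"
    unfolding frob_def[of n "\<lambda>i j. D i j - pmat n k i j"] frob_sq pmat_dist
    using k(2) by simp
  also have "\<dots> \<le> r_S2 n D" by (rule r_ge[OF D pmat_Omega])
  finally show ?thesis .
qed

lemma ratio_bound:
  assumes D: "D \<in> Omega n" and n: "n \<ge> 2"
  shows "\<bar>(r_S2 n D)\<^sup>2 / ((frob n D)\<^sup>2 + real n) - 1\<bar> \<le> 2 / real n"
proof -
  define F where "F = (frob n D)\<^sup>2"
  have F0: "0 \<le> F" unfolding F_def by simp
  have lo: "sqrt (F + real n - 2) \<le> r_S2 n D" using r_lower[OF D] n F_def by simp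
  have up: "r_S2 n D \<le> sqrt (F + real n)" using r_upper[OF D] F_def by simp
  have nn: "0 \<le> F + real n - 2" using n F0 by simp
  have r0: "0 \<le> r_S2 n D" using order_trans[OF real_sqrt_ge_zero[OF nn] lo] .
  have "F + real n - 2 \<le> (r_S2 n D)\<^sup>2"
  proof -
    have "F + real n - 2 = (sqrt (F + real n - 2))\<^sup>2" using nn by simp
    also have "\<dots> \<le> (r_S2 n D)\<^sup>2" using lo nn by (intro power_mono) auto
    finally show ?thesis .
  qed
  moreover have "(r_S2 n D)\<^sup>2 \<le> F + real n"
  proof -
    have "(r_S2 n D)\<^sup>2 \<le> (sqrt (F + real n))\<^sup>2" using up r0 by (intro power_mono) auto
    also have "\<dots> = F + real n" using F0 by simp
    finally show ?thesis .
  qed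
  ultimately have a: "\<bar>(r_S2 n D)\<^sup>2 - (F + real n)\<bar> \<le> 2" by linarith
  have pos: "0 < F + real n" using n F0 by simp
  have "\<bar>(r_S2 n D)\<^sup>2 / (F + real n) - 1\<bar> = \<bar>(r_S2 n D)\<^sup>2 - (F + real n)\<bar> / (F + real n)"
  proof -
    have "(r_S2 n D)\<^sup>2 / (F + real n) - 1 = ((r_S2 n D)\<^sup>2 - (F + real n)) / (F + real n)"
      using pos by (simp add: diff_divide_distrib)
    then show ?thesis using pos by (simp add: abs_divide)
  qed
  also have "\<dots> \<le> 2 / (F + real n)" using a pos by (simp add: divide_right_mono)
  also have "\<dots> \<le> 2 / real n" using n F0 by (intro divide_left_mono) auto
  finally show ?thesis unfolding F_def .
qed

theorem mainTheorem4:
  shows "(\<forall>n::nat. n \<ge> 1 \<longrightarrow> (\<forall>D\<in>Omega n.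
            sqrt ((frob n D)\<^sup>2 + real n - 2) \<le> r_S2 n D \<and>
            r_S2 n D \<le> sqrt ((frob n D)\<^sup>2 + real n)))
       \<and> (\<lambda>n. SUP D\<in>Omega n. \<bar>(r_S2 n D)\<^sup>2 / ((frob n D)\<^sup>2 + real n) - 1\<bar>) \<longlonglongrightarrow> 0"
proof
  show "\<forall>n::nat. n \<ge> 1 \<longrightarrow> (\<forall>D\<in>Omega n.
            sqrt ((frob n D)\<^sup>2 + real n - 2) \<le> r_S2 n D \<and>
            r_S2 n D \<le> sqrt ((frob n D)\<^sup>2 + real n))"
    using r_lower r_upper by blast
next
  let ?s = "\<lambda>n. SUP D\<in>Omega n. \<bar>(r_S2 n D)\<^sup>2 / ((frob n D)\<^sup>2 + real n) - 1\<bar>"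
  have ev: "eventually (\<lambda>n. 0 \<le> ?s n \<and> ?s n \<le> 2 / real n) sequentially"
  proof (rule eventually_sequentiallyI[of 2])
    fix n :: nat assume n: "n \<ge> 2"
    have b: "\<And>D. D \<in> Omega n \<Longrightarrow> \<bar>(r_S2 n D)\<^sup>2 / ((frob n D)\<^sup>2 + real n) - 1\<bar> \<le> 2 / real n"
      using ratio_bound n by blast
    have "?s n \<le> 2 / real n" using b Omega_ne by (auto intro!: cSUP_least)
    moreover have "0 \<le> ?s n"
    proof -
      obtain D where "D \<in> Omega n" using Omega_ne by blast
      moreover have "bdd_above ((\<lambda>D. \<bar>(r_S2 n D)\<^sup>2 / ((frob n D)\<^sup>2 + real n) - 1\<bar>) ` Omega n)"
        using b by (auto intro!: bdd_aboveI)
      ultimately show ?thesis by (meson abs_ge_zero cSUP_upper order_trans)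
    qed
    ultimately show "0 \<le> ?s n \<and> ?s n \<le> 2 / real n" by simp
  qed
  have l: "(\<lambda>n. 2 / real n) \<longlonglongrightarrow> 0"
    by (rule lim_const_over_n)
  show "?s \<longlonglongrightarrow> 0"
    by (rule tendsto_sandwich[OF _ _ tendsto_const l]) (use ev in \<open>auto elim: eventually_mono\<close>)
qed

end
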